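(* Let $(X,d,f)$ be a dynamical system where $X$ is uniformly locally compact. Then $(X,d,f)$ has the shadowing property if and only if it has the finite shadowing property.
   Context: A dynamical system $(X,d,f)$ is a separable metric space with continuous $f:X\to X$. $(X,d)$ is uniformly locally compact if there is $\varepsilon>0$ such that for every $x\in X$ the open ball of radius $\varepsilon$ centered at $x$ is contained in a compact set. A $\delta$-pseudo-orbit is a finite or infinite sequence $(x_n)$ with $d(f(x_n),x_{n+1})<\delta$; $x$ $\varepsilon$-shadows it if $d(f^n(x),x_n)<\varepsilon$ for all indices. Finite shadowing property: for every $\varepsilon>0$ there is $\delta>0$ such that every finite $\delta$-pseudo-orbit is $\varepsilon$-shadowed by some point; shadowing property: same for infinite pseudo-orbits. *)

theory Defs
  imports "HOL-Analysis.Analysis"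
begin

definition dyn_system :: "'a::metric_space set \<Rightarrow> ('a \<Rightarrow> 'a) \<Rightarrow> bool" where
  "dyn_system X f \<longleftrightarrow> separable_space (top_of_set X) \<and> f ` X \<subseteq> X \<and> continuous_on X f"

definition unif_locally_compact :: "'a::metric_space set \<Rightarrow> bool" where
  "unif_locally_compact X \<longleftrightarrow>
     (\<exists>e>0. \<forall>x\<in>X. \<exists>K. compact K \<and> K \<subseteq> X \<and> ball x e \<inter> X \<subseteq> K)"

definition fin_pseudo_orbit ::
  "'a::metric_space set \<Rightarrow> ('a \<Rightarrow> 'a) \<Rightarrow> real \<Rightarrow> (nat \<Rightarrow> 'a) \<Rightarrow> nat \<Rightarrow> bool" where
  "fin_pseudo_orbit X f \<delta> xs n \<longleftrightarrow>
     (\<forall>i\<le>n. xs i \<in> X) \<and> (\<forall>i<n. dist (f (xs i)) (xs (Suc i)) < \<delta>)"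

definition pseudo_orbit ::
  "'a::metric_space set \<Rightarrow> ('a \<Rightarrow> 'a) \<Rightarrow> real \<Rightarrow> (nat \<Rightarrow> 'a) \<Rightarrow> bool" where
  "pseudo_orbit X f \<delta> xs \<longleftrightarrow>
     (\<forall>i. xs i \<in> X) \<and> (\<forall>i. dist (f (xs i)) (xs (Suc i)) < \<delta>)"

definition finite_shadowing :: "'a::metric_space set \<Rightarrow> ('a \<Rightarrow> 'a) \<Rightarrow> bool" where
  "finite_shadowing X f \<longleftrightarrow>
     (\<forall>\<epsilon>>0. \<exists>\<delta>>0. \<forall>xs n. fin_pseudo_orbit X f \<delta> xs n \<longrightarrow>
        (\<exists>y\<in>X. \<forall>i\<le>n. dist ((f ^^ i) y) (xs i) < \<epsilon>))"

definition shadowing :: "'a::metric_space set \<Rightarrow> ('a \<Rightarrow> 'a) \<Rightarrow> bool" where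
  "shadowing X f \<longleftrightarrow>
     (\<forall>\<epsilon>>0. \<exists>\<delta>>0. \<forall>xs. pseudo_orbit X f \<delta> xs \<longrightarrow>
        (\<exists>y\<in>X. \<forall>i. dist ((f ^^ i) y) (xs i) < \<epsilon>))"

end

theory Submission
  imports Defs
begin

lemma funpow_in: "f ` X \<subseteq> X \<Longrightarrow> x \<in> X \<Longrightarrow> (f ^^ i) x \<in> X"
  by (induction i) auto

lemma cont_funpow: "f ` X \<subseteq> X \<Longrightarrow> continuous_on X f \<Longrightarrow> continuous_on X (f ^^ i)"
proof (induction i)
  case 0 then show ?case by (simp add: continuous_on_id)
next
  case (Suc i)
  have "continuous_on X (f \<circ> (f ^^ i))"
    using Suc by (intro continuous_on_compose) (auto intro: continuous_on_subset funpow_in)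
  then show ?case by (simp add: funpow_Suc_right[symmetric] funpow_swap1 comp_def)
qed

lemma sh_imp_fin:
  assumes fX: "f ` X \<subseteq> X" and sh: "shadowing X f"
  shows "finite_shadowing X f"
  unfolding finite_shadowing_def
proof (intro allI impI)
  fix \<epsilon> :: real assume "\<epsilon> > 0"
  then obtain \<delta> where d: "\<delta> > 0" and H: "\<And>xs. pseudo_orbit X f \<delta> xs \<Longrightarrow>
        (\<exists>y\<in>X. \<forall>i. dist ((f ^^ i) y) (xs i) < \<epsilon>)"
    using sh unfolding shadowing_def by blast
  show "\<exists>\<delta>>0. \<forall>xs n. fin_pseudo_orbit X f \<delta> xs n \<longrightarrow>
        (\<exists>y\<in>X. \<forall>i\<le>n. dist ((f ^^ i) y) (xs i) < \<epsilon>)"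
  proof (intro exI[of _ \<delta>] conjI allI impI d)
    fix xs n assume P: "fin_pseudo_orbit X f \<delta> xs n"
    define zs where "zs = (\<lambda>i. if i \<le> n then xs i else (f ^^ (i - n)) (xs n))"
    have "pseudo_orbit X f \<delta> zs"
      unfolding pseudo_orbit_def
    proof (intro conjI allI)
      fix i
      show "zs i \<in> X" using P funpow_in[OF fX] unfolding zs_def fin_pseudo_orbit_def by auto
      show "dist (f (zs i)) (zs (Suc i)) < \<delta>"
      proof (cases "i < n")
        case True then show ?thesis using P unfolding zs_def fin_pseudo_orbit_def by auto
      next
        case False
        then have "Suc i - n = Suc (i - n)" by auto
        then have "zs (Suc i) = f (zs i)" using False unfolding zs_def
          by (auto simp: funpow_swap1)
        then show ?thesis using d by simp
      qed
    qed
    then obtain y where "y \<in> X" "\<forall>i. dist ((f ^^ i) y) (zs i) < \<epsilon>" using H by blast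
    moreover have "\<And>i. i \<le> n \<Longrightarrow> zs i = xs i" unfolding zs_def by simp
    ultimately show "\<exists>y\<in>X. \<forall>i\<le>n. dist ((f ^^ i) y) (xs i) < \<epsilon>"
      by (metis)
  qed
qed

lemma fin_imp_sh:
  assumes fX: "f ` X \<subseteq> X" and cont: "continuous_on X f"
    and ulc: "unif_locally_compact X" and fs: "finite_shadowing X f"
  shows "shadowing X f"
  unfolding shadowing_def
proof (intro allI impI)
  fix \<epsilon> :: real assume ep: "\<epsilon> > 0"
  obtain e where e: "e > 0" and EK0: "\<forall>x\<in>X. \<exists>K. compact K \<and> K \<subseteq> X \<and> ball x e \<inter> X \<subseteq> K"
    using ulc unfolding unif_locally_compact_def by (elim exE conjE) 
  have EK: "\<And>x. x \<in> X \<Longrightarrow> \<exists>K. compact K \<and> K \<subseteq> X \<and> ball x e \<inter> X \<subseteq> K"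
    using EK0 by (rule bspec)
  define \<epsilon>' where "\<epsilon>' = min (\<epsilon>/2) e"
  have ep': "\<epsilon>' > 0" "\<epsilon>' < \<epsilon>" "\<epsilon>' \<le> e" using ep e unfolding \<epsilon>'_def by auto
  have "\<exists>\<delta>>0. \<forall>xs n. fin_pseudo_orbit X f \<delta> xs n \<longrightarrow>
        (\<exists>y\<in>X. \<forall>i\<le>n. dist ((f ^^ i) y) (xs i) < \<epsilon>')"
    using fs ep'(1) unfolding finite_shadowing_def by (elim allE impE)
  then obtain \<delta> where d: "\<delta> > 0" and H0: "\<forall>xs n. fin_pseudo_orbit X f \<delta> xs n \<longrightarrow>
        (\<exists>y\<in>X. \<forall>i\<le>n. dist ((f ^^ i) y) (xs i) < \<epsilon>')"
    by (elim exE conjE)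
  have H: "\<And>xs n. fin_pseudo_orbit X f \<delta> xs n \<Longrightarrow>
        (\<exists>y\<in>X. \<forall>i\<le>n. dist ((f ^^ i) y) (xs i) < \<epsilon>')" using H0 by blast
  show "\<exists>\<delta>>0. \<forall>xs. pseudo_orbit X f \<delta> xs \<longrightarrow> (\<exists>y\<in>X. \<forall>i. dist ((f ^^ i) y) (xs i) < \<epsilon>)"
  proof (intro exI[of _ \<delta>] conjI allI impI d)
    fix xs assume P: "pseudo_orbit X f \<delta> xs"
    have "\<forall>n. \<exists>y. y \<in> X \<and> (\<forall>i\<le>n. dist ((f ^^ i) y) (xs i) < \<epsilon>')"
    proof
      fix n
      have "fin_pseudo_orbit X f \<delta> xs n" using P
        unfolding pseudo_orbit_def fin_pseudo_orbit_def by auto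
      then show "\<exists>y. y \<in> X \<and> (\<forall>i\<le>n. dist ((f ^^ i) y) (xs i) < \<epsilon>')" using H by blast
    qed
    then obtain y where yy: "\<forall>n. y n \<in> X \<and> (\<forall>i\<le>n. dist ((f ^^ i) (y n)) (xs i) < \<epsilon>')"
      by (rule choice[THEN exE])
    have yX: "\<And>n. y n \<in> X" using yy by blast
    have yd: "\<And>n i. i \<le> n \<Longrightarrow> dist ((f ^^ i) (y n)) (xs i) < \<epsilon>'" using yy by blast
    have x0: "xs 0 \<in> X" using P unfolding pseudo_orbit_def by auto
    obtain K where K: "compact K" "K \<subseteq> X" "ball (xs 0) e \<inter> X \<subseteq> K" using EK[OF x0] by blast
    have yK: "y n \<in> K" for n
    proof -
      have "dist (y n) (xs 0) < \<epsilon>'" using yd[of 0 n] by simp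
      then have "y n \<in> ball (xs 0) e" using ep' by (simp add: dist_commute)
      then show ?thesis using K yX by blast
    qed
    obtain l r where lK: "l \<in> K" and r: "strict_mono r" and lim: "(y \<circ> r) \<longlonglongrightarrow> l"
      using seq_compactE[OF compact_imp_seq_compact[OF K(1)]] yK by blast
    have lX: "l \<in> X" using lK K by blast
    show "\<exists>y\<in>X. \<forall>i. dist ((f ^^ i) y) (xs i) < \<epsilon>"
    proof (rule bexI[OF _ lX], rule allI)
      fix i
      have "((\<lambda>k. (f ^^ i) ((y \<circ> r) k)) \<longlongrightarrow> (f ^^ i) l) sequentially"
        by (rule continuous_on_tendsto_compose[OF cont_funpow[OF fX cont] lim lX]) (simp add: yX)
      then have T: "((\<lambda>k. dist ((f ^^ i) ((y \<circ> r) k)) (xs i)) \<longlongrightarrow> dist ((f ^^ i) l) (xs i)) sequentially"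
        by (intro tendsto_dist tendsto_const)
      have "eventually (\<lambda>k. dist ((f ^^ i) ((y \<circ> r) k)) (xs i) \<le> \<epsilon>') sequentially"
        unfolding eventually_sequentially
      proof (intro exI[of _ i] allI impI)
        fix k assume "k \<ge> i"
        then have "i \<le> r k" using seq_suble[OF r, of k] by linarith
        then show "dist ((f ^^ i) ((y \<circ> r) k)) (xs i) \<le> \<epsilon>'" using yd[of i "r k"] by simp
      qed
      then have "dist ((f ^^ i) l) (xs i) \<le> \<epsilon>'"
        using T by (intro tendsto_upperbound) auto
      then show "dist ((f ^^ i) l) (xs i) < \<epsilon>" using ep' by linarith
    qed
  qed
qed

theorem proposition2p16:
  fixes X :: "'a::metric_space set" and f :: "'a \<Rightarrow> 'a"
  assumes "dyn_system X f"
    and "unif_locally_compact X"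
  shows "shadowing X f \<longleftrightarrow> finite_shadowing X f"
proof -
  have "f ` X \<subseteq> X" "continuous_on X f" using assms(1) unfolding dyn_system_def by auto
  then show ?thesis using assms(2) sh_imp_fin fin_imp_sh by metis
qed

end
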